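(* Let $R>1$ and let $f$ be analytic in a neighborhood of $\Omega_R=\{z\in\mathbb{C}: 1\le |z|\le R,\ \Im z\ge 0\}$. Let $\rho>0$ and suppose that for some constant $C_0>0$, $|f(x)|\le C_0|x|^\rho$ for all $x\in\mathbb{R}\cap\Omega_R$. Set $M=\max_{|z|=1,\, z\in\Omega_R}|f(z)|$ and $$A(R)=\max\Big(C_0R^\rho,\ MR^\rho,\ \max_{z\in\Omega_R}\Re f(z)\Big).$$ Then if $1<r<R$ and $z\in\Omega_R$ with $|z|=r$, we have $|f(z)|\le \frac{2r^\rho}{R^\rho-r^\rho}A(R)$. *)

theory Defs
  imports "HOL-Analysis.Analysis"
begin

definition half_annulus :: "real \<Rightarrow> complex set" where
  "half_annulus R = {z. 1 \<le> norm z \<and> norm z \<le> R \<and> Im z \<ge> 0}"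

end

theory Submission
  imports Defs "HOL-Complex_Analysis.Complex_Analysis"
begin

lemma norm_le_reflect:
  fixes c :: complex and a :: real
  assumes "Re c \<le> a" "a > 0"
  shows "norm c \<le> norm (2 * of_real a - c)"
proof -
  have e1: "(norm c)^2 = (Re c)^2 + (Im c)^2" by (rule cmod_power2)
  have e2: "(norm (2 * of_real a - c))^2 = (2 * a - Re c)^2 + (Im c)^2"
    by (simp add: cmod_power2)
  have "(Re c)^2 \<le> (2 * a - Re c)^2"
  proof -
    have "(2 * a - Re c)^2 - (Re c)^2 = 4 * a * (a - Re c)" by (simp add: power2_eq_square algebra_simps)
    also have "\<dots> \<ge> 0" using assms by simp
    finally show ?thesis by simp
  qed
  then have "(norm c)^2 \<le> (norm (2 * of_real a - c))^2" using e1 e2 by simp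
  then show ?thesis by (rule power2_le_imp_le) simp
qed

lemma h_bound:
  fixes c :: complex and a t :: real
  assumes "Re c \<le> a" "a > 0" "norm c \<le> a * t" "0 \<le> t" "t \<le> 1"
  shows "norm (c / (2 * of_real a - c)) \<le> t"
proof -
  have n1: "norm (2 * of_real a - c) \<ge> 2 * a - norm c"
    using norm_triangle_ineq2[of "2 * of_real a" c] by simp
  have n2: "2 * a - norm c \<ge> a" using assms by (smt (verit) mult_left_le)
  have pos: "norm (2 * of_real a - c) > 0" using n1 n2 assms by linarith
  have "t * norm (2 * of_real a - c) \<ge> t * (2 * a - a * t)"
    using n1 assms by (intro mult_left_mono) auto
  moreover have "t * (2 * a - a * t) \<ge> a * t"
  proof -
    have "t * (2 * a - a * t) - a * t = a * t * (1 - t)" by (simp add: algebra_simps)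
    also have "\<dots> \<ge> 0" using assms by simp
    finally show ?thesis by simp
  qed
  ultimately have "norm c \<le> t * norm (2 * of_real a - c)" using assms by linarith
  then show ?thesis using pos by (simp add: norm_divide divide_le_eq)
qed

theorem lemma2p1:
  fixes f :: "complex \<Rightarrow> complex" and R \<rho> C\<^sub>0 M A r :: real and z :: complex
  assumes "R > 1"
    and "f analytic_on half_annulus R"
    and "\<rho> > 0" and "C\<^sub>0 > 0"
    and "\<And>x::real. of_real x \<in> half_annulus R \<Longrightarrow> norm (f (of_real x)) \<le> C\<^sub>0 * \<bar>x\<bar> powr \<rho>"
    and "M = Sup ((\<lambda>w. norm (f w)) ` {w \<in> half_annulus R. norm w = 1})"
    and "A = max (C\<^sub>0 * R powr \<rho>) (max (M * R powr \<rho>) (Sup ((\<lambda>w. Re (f w)) ` half_annulus R)))"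
    and "1 < r" and "r < R"
    and "z \<in> half_annulus R" and "norm z = r"
  shows "norm (f z) \<le> 2 * r powr \<rho> / (R powr \<rho> - r powr \<rho>) * A"
proof -
  define S where "S = half_annulus R"
  have S_eq: "S = {w. 1 \<le> norm w} \<inter> {w. norm w \<le> R} \<inter> {w. 0 \<le> Im w}"
    unfolding S_def half_annulus_def by auto
  have clS: "closed S" unfolding S_eq
    by (intro closed_Int closed_Collect_le continuous_intros)
  have bS: "bounded S" unfolding bounded_iff S_def half_annulus_def by auto
  have cS: "compact S" using clS bS by (simp add: compact_eq_bounded_closed)
  obtain T where T: "open T" "S \<subseteq> T" "f holomorphic_on T"
    using assms(2) unfolding S_def analytic_on_holomorphic by blast
  have fS: "f holomorphic_on S" using T holomorphic_on_subset by blast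
  have cf: "continuous_on S f" using fS holomorphic_on_imp_continuous_on by blast
  have bdRe: "bdd_above ((\<lambda>w. Re (f w)) ` S)"
  proof -
    have "compact ((\<lambda>w. Re (f w)) ` S)"
      by (intro compact_continuous_image continuous_intros cf cS)
    then show ?thesis by (intro bounded_imp_bdd_above compact_imp_bounded)
  qed
  have bdN: "bdd_above ((\<lambda>w. norm (f w)) ` S)"
  proof -
    have "compact ((\<lambda>w. norm (f w)) ` S)"
      by (intro compact_continuous_image continuous_intros cf cS)
    then show ?thesis by (intro bounded_imp_bdd_above compact_imp_bounded)
  qed
  have Rpos: "R powr \<rho> > 0" using assms(1) by simp
  have ReA: "Re (f w) \<le> A" if "w \<in> S" for w
  proof -
    have "Re (f w) \<le> Sup ((\<lambda>w. Re (f w)) ` S)" using cSup_upper[OF _ bdRe] that by simp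
    then show ?thesis using assms(7) S_def by simp
  qed
  have Apos: "A > 0"
  proof -
    have "C\<^sub>0 * R powr \<rho> > 0" using assms(4) Rpos by simp
    then show ?thesis using assms(7) by linarith
  qed
  have MA: "M * R powr \<rho> \<le> A" using assms(7) by simp
  have CA: "C\<^sub>0 * R powr \<rho> \<le> A" using assms(7) by simp
  define q where "q w = exp (of_real \<rho> * Ln (-\<i> * w))" for w
  have notcut: "-\<i> * w \<notin> \<real>\<^sub>\<le>\<^sub>0" if "w \<in> S" for w
  proof
    assume "-\<i> * w \<in> \<real>\<^sub>\<le>\<^sub>0"
    then have "Im w \<le> 0" "Re w = 0" by (auto simp: complex_nonpos_Reals_iff)
    moreover have "Im w \<ge> 0" "norm w \<ge> 1" using that unfolding S_def half_annulus_def by auto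
    ultimately have "w = 0" by (simp add: complex_eq_iff)
    then show False using \<open>norm w \<ge> 1\<close> by simp
  qed
  have nq: "norm (q w) = norm w powr \<rho>" if "w \<in> S" for w
  proof -
    have "w \<noteq> 0" using that unfolding S_def half_annulus_def by auto
    then have "-\<i> * w \<noteq> 0" by simp
    then show ?thesis unfolding q_def using \<open>w \<noteq> 0\<close>
      by (simp add: norm_exp_eq_Re powr_def norm_mult)
  qed
  have nz: "2 * of_real A - f w \<noteq> 0" if "w \<in> S" for w
  proof
    assume "2 * of_real A - f w = 0"
    then have "Re (2 * of_real A - f w) = 0" by simp
    then have "Re (f w) = 2 * A" by simp
    then show False using ReA[OF that] Apos by simp
  qed
  define G where "G w = f w / (2 * of_real A - f w) * of_real (R powr \<rho>) / q w" for w
  have qnz: "q w \<noteq> 0" for w unfolding q_def by simp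
  have hG: "G holomorphic_on S"
    unfolding G_def q_def
    by (intro holomorphic_intros fS) (use nz notcut in auto)
  have Gbound: "norm (G w) \<le> 1" if w: "w \<in> frontier S" for w
  proof -
    have wS: "w \<in> S" using w clS frontier_subset_closed by blast
    have nw: "norm w > 0" using wS unfolding S_def half_annulus_def by auto
    define t where "t = norm w powr \<rho> / R powr \<rho>"
    have t0: "0 \<le> t" unfolding t_def by simp
    have t1: "t \<le> 1" unfolding t_def using Rpos wS assms(3)
      by (auto simp: S_def half_annulus_def intro!: powr_mono2)
    have tpos: "t > 0" unfolding t_def using nw Rpos by simp
    have case3: "1 < norm w \<and> norm w < R \<and> 0 < Im w \<Longrightarrow> False"
    proof -
      assume H: "1 < norm w \<and> norm w < R \<and> 0 < Im w"
      define U where "U = {w. 1 < norm w} \<inter> {w. norm w < R} \<inter> {w. 0 < Im w}"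
      have "open U" unfolding U_def
        by (intro open_Int open_Collect_less continuous_intros)
      moreover have "U \<subseteq> S" unfolding U_def S_def half_annulus_def by auto
      ultimately have "U \<subseteq> interior S" by (rule interior_maximal[rotated])
      moreover have "w \<in> U" using H unfolding U_def by auto
      ultimately show False using w by (auto simp: frontier_def)
    qed
    have hb: "norm (f w / (2 * of_real A - f w)) \<le> t"
    proof (cases "norm w = R")
      case True
      then have "t = 1" unfolding t_def using Rpos by simp
      moreover have "norm (f w) \<le> norm (2 * of_real A - f w)"
        using norm_le_reflect[OF ReA[OF wS] Apos] by simp
      ultimately show ?thesis using nz[OF wS] by (simp add: norm_divide divide_le_eq)
    next
      case False
      then have "norm w = 1 \<or> Im w = 0" using case3 wS unfolding S_def half_annulus_def by force
      then have "norm (f w) \<le> A * t"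
      proof
        assume n1: "norm w = 1"
        have "norm (f w) \<le> M" unfolding assms(6)
          by (rule cSup_upper) (use wS n1 S_def in \<open>auto intro: bdd_above_mono[OF bdN]\<close>)
        moreover have "A * t = A / R powr \<rho>" unfolding t_def n1 by simp
        moreover have "M \<le> A / R powr \<rho>" using MA Rpos by (simp add: le_divide_eq)
        ultimately show ?thesis by simp
      next
        assume "Im w = 0"
        then have we: "w = of_real (Re w)" by (simp add: complex_eq_iff)
        have "norm (f w) \<le> C\<^sub>0 * \<bar>Re w\<bar> powr \<rho>"
          using assms(5)[of "Re w"] wS we S_def by simp
        also have "\<dots> \<le> A / R powr \<rho> * \<bar>Re w\<bar> powr \<rho>"
          using CA Rpos by (intro mult_right_mono) (simp_all add: le_divide_eq)
        also have "\<dots> = A * t" unfolding t_def by (subst we) simp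
        finally show ?thesis .
      qed
      then show ?thesis using h_bound[OF ReA[OF wS] Apos _ t0 t1] by simp
    qed
    have "norm (G w) = norm (f w / (2 * of_real A - f w)) * R powr \<rho> / norm w powr \<rho>"
      unfolding G_def using nq[OF wS] Rpos by (simp add: norm_divide norm_mult)
    also have "\<dots> \<le> t * R powr \<rho> / norm w powr \<rho>"
      using hb Rpos nw by (intro divide_right_mono mult_right_mono) auto
    also have "\<dots> = 1" unfolding t_def using Rpos nw by simp
    finally show ?thesis .
  qed
  have Gz: "norm (G z) \<le> 1"
    using maximum_modulus_frontier[of G S 1 z] hG clS bS Gbound assms(10) S_def
    by (metis closure_closed holomorphic_on_imp_continuous_on holomorphic_on_subset interior_subset)
  define h where "h = f z / (2 * of_real A - f z)"
  define s where "s = r powr \<rho> / R powr \<rho>"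
  have zS: "z \<in> S" using assms(10) S_def by simp
  have rp: "r powr \<rho> < R powr \<rho>" using assms by (intro powr_less_mono2) auto
  have s1: "s < 1" unfolding s_def using rp Rpos by simp
  have s0: "s \<ge> 0" unfolding s_def by simp
  have hs: "norm h \<le> s"
  proof -
    have "norm (G z) = norm h * R powr \<rho> / r powr \<rho>"
      unfolding G_def h_def using nq[OF zS] assms(11) Rpos by (simp add: norm_divide norm_mult)
    then have "norm h * R powr \<rho> / r powr \<rho> \<le> 1" using Gz by simp
    moreover have "r powr \<rho> > 0" using assms by simp
    ultimately show ?thesis unfolding s_def using Rpos by (simp add: divide_le_eq le_divide_eq)
  qed
  have feq: "f z * (1 + h) = 2 * of_real A * h"
    unfolding h_def using nz[OF zS] by (simp add: field_simps)
  have n1h: "norm (1 + h) \<ge> 1 - s"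
    using norm_triangle_ineq2[of 1 "-h"] hs by simp
  have "norm (f z) * norm (1 + h) = 2 * A * norm h"
    using arg_cong[OF feq, of norm] Apos by (simp add: norm_mult)
  then have "norm (f z) * (1 - s) \<le> 2 * A * s"
    using n1h hs Apos
    by (smt (verit) mult_left_mono norm_ge_zero)
  then have "norm (f z) \<le> 2 * A * s / (1 - s)" using s1 by (simp add: le_divide_eq)
  also have "2 * A * s / (1 - s) = 2 * r powr \<rho> / (R powr \<rho> - r powr \<rho>) * A"
    unfolding s_def using Rpos rp by (simp add: field_simps)
  finally show ?thesis .
qed

end
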